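(* Let $(X,d)$ be a separable complete metric space, $(\Omega,\mathsf{F},\mathbb{P})$ a probability space with a filtration $(\mathsf{F}_n)$, and $S\subseteq X$ non-empty and closed. Let $\phi:X\times X\to[0,\infty)$ be a Carath\'eodory distance with $\phi(x,x)=0$ for all $x\in X$ that satisfies the weak quasi-triangle inequality with a concave nondecreasing function $H:[0,\infty)\to[0,\infty)$. Let $(x_n)$ be an $X$-valued stochastic process adapted to $(\mathsf{F}_n)$ which is stochastically $\phi$-quasi-Fej\'er monotone w.r.t.\ $S$ and $(\mathsf{F}_n)$, i.e.\ there are $(\zeta_n),(\xi_n)\in\ell^1_+(\mathsf{F}_n)$ with $\mathbb{E}[\phi(z,x_{n+1})\mid\mathsf{F}_n]\le(1+\zeta_n)\phi(z,x_n)+\xi_n$ a.s.\ for all $n\in\mathbb{N}$ and all $z\in S$. Suppose that $\mathbb{E}[\phi(o,x_n)]<\infty$ for all $n\in\mathbb{N}$, for some fixed $o\in S$. Then $(x_n)$ is strongly stochastically $\phi$-quasi-Fej\'er monotone w.r.t.\ $S$ and $(\mathsf{F}_n)$ (with the same error sequences).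
   Context: $X$ carries its Borel $\sigma$-algebra. A Carath\'eodory distance is a function $\phi:X\times X\to[0,\infty)$ continuous in its left argument and Borel measurable in its right argument. $\phi$ satisfies the weak quasi-triangle inequality with $H$ if $\phi(x,y)\le H(\phi(x,o)+\phi(y,o))$ for all $x,y,o\in X$. $\ell^1_+(\mathsf{F}_n)$ is the set of sequences of nonnegative random variables $(\xi_n)$ with $\xi_n$ $\mathsf{F}_n$-measurable and $\sum_n\xi_n<\infty$ a.s. Strong stochastic $\phi$-quasi-Fej\'er monotonicity w.r.t.\ $S$ means: $\mathbb{E}[\phi(z,x_{n+1})\mid\mathsf{F}_n]\le(1+\zeta_n)\phi(z,x_n)+\xi_n$ a.s.\ for all $n\in\mathbb{N}$ and all $X$-valued $\mathsf{F}_n$-measurable random variables $z$ with $z\in S$ a.s.\ and $\mathbb{E}[\phi(z,x_n)]<\infty$. *)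

theory Defs
  imports "HOL-Analysis.Analysis" "HOL-Probability.Probability"
begin

definition caratheodory_distance :: "('x::topological_space \<Rightarrow> 'x \<Rightarrow> real) \<Rightarrow> bool" where
  "caratheodory_distance \<phi> \<longleftrightarrow>
     (\<forall>x y. 0 \<le> \<phi> x y) \<and>
     (\<forall>y. continuous_on UNIV (\<lambda>x. \<phi> x y)) \<and>
     (\<forall>x. (\<lambda>y. \<phi> x y) \<in> borel_measurable borel)"

definition weak_quasi_triangle :: "('x \<Rightarrow> 'x \<Rightarrow> real) \<Rightarrow> (real \<Rightarrow> real) \<Rightarrow> bool" where
  "weak_quasi_triangle \<phi> H \<longleftrightarrow> (\<forall>x y o'. \<phi> x y \<le> H (\<phi> x o' + \<phi> y o'))"

definition ell1_plus :: "'b measure \<Rightarrow> (nat \<Rightarrow> 'b measure) \<Rightarrow> (nat \<Rightarrow> 'b \<Rightarrow> real) \<Rightarrow> bool" where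
  "ell1_plus M F \<xi> \<longleftrightarrow>
     (\<forall>n. \<xi> n \<in> borel_measurable (F n)) \<and>
     (\<forall>n. \<forall>\<omega>\<in>space M. 0 \<le> \<xi> n \<omega>) \<and>
     (AE \<omega> in M. summable (\<lambda>n. \<xi> n \<omega>))"

end

theory Submission
  imports Defs
begin

lemma (in sigma_finite_subalgebra) nn_cond_exp_countable_piece:
  fixes J :: "'a \<Rightarrow> nat" and f :: "nat \<Rightarrow> 'a \<Rightarrow> ennreal"
  assumes J[measurable]: "J \<in> measurable F (count_space UNIV)"
    and f[measurable]: "\<And>i. f i \<in> borel_measurable M"
  shows "AE \<omega> in M. nn_cond_exp M F (\<lambda>\<omega>. f (J \<omega>) \<omega>) \<omega> = nn_cond_exp M F (f (J \<omega>)) \<omega>"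
proof -
  have JM[measurable]: "J \<in> measurable M (count_space UNIV)"
    using measurable_from_subalg[OF subalg J] .
  have fJ[measurable]: "(\<lambda>\<omega>. f (J \<omega>) \<omega>) \<in> borel_measurable M"
    by (rule measurable_compose_countable[OF f JM])
  have "AE \<omega> in M. \<forall>i. J \<omega> = i \<longrightarrow> nn_cond_exp M F (\<lambda>\<omega>. f (J \<omega>) \<omega>) \<omega> = nn_cond_exp M F (f i) \<omega>"
  proof (rule AE_all_countable[THEN iffD2], intro allI)
    fix i
    define ind where "ind = (\<lambda>\<omega>. if J \<omega> = i then 1 else (0::ennreal))"
    have ind[measurable]: "ind \<in> borel_measurable F" unfolding ind_def by measurable
    have h1: "AE \<omega> in M. ind \<omega> * nn_cond_exp M F (\<lambda>\<omega>. f (J \<omega>) \<omega>) \<omega> = nn_cond_exp M F (\<lambda>\<omega>. ind \<omega> * f (J \<omega>) \<omega>) \<omega>"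
      by (rule nn_cond_exp_prod) (auto)
    have h2: "AE \<omega> in M. ind \<omega> * nn_cond_exp M F (f i) \<omega> = nn_cond_exp M F (\<lambda>\<omega>. ind \<omega> * f i \<omega>) \<omega>"
      by (rule nn_cond_exp_prod) (auto)
    have eq: "(\<lambda>\<omega>. ind \<omega> * f (J \<omega>) \<omega>) = (\<lambda>\<omega>. ind \<omega> * f i \<omega>)"
      by (auto simp: ind_def)
    have h1': "AE \<omega> in M. ind \<omega> * nn_cond_exp M F (\<lambda>\<omega>. f (J \<omega>) \<omega>) \<omega> = nn_cond_exp M F (\<lambda>\<omega>. ind \<omega> * f i \<omega>) \<omega>"
      using h1 unfolding eq .
    show "AE \<omega> in M. J \<omega> = i \<longrightarrow> nn_cond_exp M F (\<lambda>\<omega>. f (J \<omega>) \<omega>) \<omega> = nn_cond_exp M F (f i) \<omega>"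
      using h1' h2
    proof eventually_elim
      case (elim \<omega>)
      show ?case
      proof
        assume "J \<omega> = i"
        then have "ind \<omega> = 1" by (simp add: ind_def)
        with elim show "nn_cond_exp M F (\<lambda>\<omega>. f (J \<omega>) \<omega>) \<omega> = nn_cond_exp M F (f i) \<omega>" by simp
      qed
    qed
  qed
  then show ?thesis by eventually_elim auto
qed

lemma (in sigma_finite_subalgebra) nn_cond_exp_SUP:
  fixes g :: "nat \<Rightarrow> 'a \<Rightarrow> ennreal"
  assumes inc: "\<And>m \<omega>. g m \<omega> \<le> g (Suc m) \<omega>" and g[measurable]: "\<And>m. g m \<in> borel_measurable M"
  shows "AE \<omega> in M. nn_cond_exp M F (\<lambda>\<omega>. SUP m. g m \<omega>) \<omega> = (SUP m. nn_cond_exp M F (g m) \<omega>)"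
proof -
  have "AE \<omega> in M. (SUP m. nn_cond_exp M F (g m) \<omega>) = nn_cond_exp M F (\<lambda>\<omega>. SUP m. g m \<omega>) \<omega>"
  proof (rule nn_cond_exp_charact)
    fix A assume A[measurable]: "A \<in> sets F"
    have AM[measurable]: "A \<in> sets M" using A subalg by (meson subalgebra_def subsetD)
    have incG: "\<And>m. AE \<omega> in M. nn_cond_exp M F (g m) \<omega> \<le> nn_cond_exp M F (g (Suc m)) \<omega>"
      by (rule nn_cond_exp_mono) (auto simp: inc)
    have "(\<integral>\<^sup>+ \<omega>\<in>A. (SUP m. g m \<omega>) \<partial>M) = (\<integral>\<^sup>+ \<omega>. (SUP m. indicator A \<omega> * g m \<omega>) \<partial>M)"
      by (simp add: SUP_mult_left_ennreal mult.commute)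
    also have "\<dots> = (SUP m. \<integral>\<^sup>+ \<omega>. indicator A \<omega> * g m \<omega> \<partial>M)"
      by (rule nn_integral_monotone_convergence_SUP_AE) (auto intro!: mult_left_mono inc simp: AM)
    also have "\<dots> = (SUP m. \<integral>\<^sup>+ \<omega>. indicator A \<omega> * nn_cond_exp M F (g m) \<omega> \<partial>M)"
      by (simp add: nn_cond_exp_intg)
    also have "\<dots> = (\<integral>\<^sup>+ \<omega>. (SUP m. indicator A \<omega> * nn_cond_exp M F (g m) \<omega>) \<partial>M)"
    proof (rule nn_integral_monotone_convergence_SUP_AE[symmetric])
      fix m show "AE \<omega> in M. indicator A \<omega> * nn_cond_exp M F (g m) \<omega> \<le> indicator A \<omega> * nn_cond_exp M F (g (Suc m)) \<omega>"
        using incG[of m] by eventually_elim (auto intro: mult_left_mono)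
    qed (simp add: AM)
    also have "\<dots> = (\<integral>\<^sup>+ \<omega>\<in>A. (SUP m. nn_cond_exp M F (g m) \<omega>) \<partial>M)"
      by (simp add: SUP_mult_left_ennreal mult.commute)
    finally show "(\<integral>\<^sup>+ \<omega>\<in>A. (SUP m. g m \<omega>) \<partial>M) = (\<integral>\<^sup>+ \<omega>\<in>A. (SUP m. nn_cond_exp M F (g m) \<omega>) \<partial>M)" .
  qed auto
  then show ?thesis by eventually_elim simp
qed

theorem proposition4p5:
  fixes M :: "'b measure" and F :: "nat \<Rightarrow> 'b measure"
    and S :: "'x::polish_space set" and \<phi> :: "'x \<Rightarrow> 'x \<Rightarrow> real"
    and H :: "real \<Rightarrow> real" and x :: "nat \<Rightarrow> 'b \<Rightarrow> 'x"
    and \<zeta> \<xi> :: "nat \<Rightarrow> 'b \<Rightarrow> real" and o' :: 'x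
  assumes "prob_space M"
    and "filtration (space M) F"
    and "\<And>n. subalgebra M (F n)"
    and "S \<noteq> {}" and "closed S"
    and "caratheodory_distance \<phi>"
    and "\<And>y. \<phi> y y = 0"
    and "concave_on {0..} H" and "mono_on {0..} H" and "\<And>t. 0 \<le> t \<Longrightarrow> 0 \<le> H t"
    and "weak_quasi_triangle \<phi> H"
    and "\<And>n. x n \<in> measurable (F n) borel"
    and "ell1_plus M F \<zeta>" and "ell1_plus M F \<xi>"
    and "\<And>n z. z \<in> S \<Longrightarrow>
           AE \<omega> in M. nn_cond_exp M (F n) (\<lambda>\<omega>. ennreal (\<phi> z (x (Suc n) \<omega>))) \<omega>
                       \<le> ennreal ((1 + \<zeta> n \<omega>) * \<phi> z (x n \<omega>) + \<xi> n \<omega>)"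
    and "o' \<in> S"
    and "\<And>n. (\<integral>\<^sup>+ \<omega>. ennreal (\<phi> o' (x n \<omega>)) \<partial>M) < \<infinity>"
  shows "\<forall>n. \<forall>z. z \<in> measurable (F n) borel \<and> (AE \<omega> in M. z \<omega> \<in> S)
               \<and> (\<integral>\<^sup>+ \<omega>. ennreal (\<phi> (z \<omega>) (x n \<omega>)) \<partial>M) < \<infinity> \<longrightarrow>
           (AE \<omega> in M. nn_cond_exp M (F n) (\<lambda>\<omega>. ennreal (\<phi> (z \<omega>) (x (Suc n) \<omega>))) \<omega>
                       \<le> ennreal ((1 + \<zeta> n \<omega>) * \<phi> (z \<omega>) (x n \<omega>) + \<xi> n \<omega>))"
proof (intro allI impI)
  fix n :: nat and z :: "'b \<Rightarrow> 'x"
  assume zass: "z \<in> measurable (F n) borel \<and> (AE \<omega> in M. z \<omega> \<in> S)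
               \<and> (\<integral>\<^sup>+ \<omega>. ennreal (\<phi> (z \<omega>) (x n \<omega>)) \<partial>M) < \<infinity>"
  have zm[measurable]: "z \<in> measurable (F n) borel" and zS: "AE \<omega> in M. z \<omega> \<in> S" using zass by auto
  interpret P: prob_space M by fact
  interpret finite_measure_subalgebra M "F n"
    by (intro finite_measure_subalgebra.intro P.finite_measure_axioms)
       (simp add: finite_measure_subalgebra_axioms_def assms)
  have car: "\<And>y. continuous_on UNIV (\<lambda>x. \<phi> x y)" "\<And>y. (\<lambda>x. \<phi> y x) \<in> borel_measurable borel"
    using assms(6) unfolding caratheodory_distance_def by auto
  have xn[measurable]: "x n \<in> measurable (F n) borel" by fact
  have xs[measurable]: "x (Suc n) \<in> borel_measurable M"
    using measurable_from_subalg[OF assms(3)[of "Suc n"] assms(12)[of "Suc n"]] .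
  let ?G = "nn_cond_exp M (F n)"
  let ?b = "\<lambda>y \<omega>. ennreal ((1 + \<zeta> n \<omega>) * \<phi> y (x n \<omega>) + \<xi> n \<omega>)"
  show "AE \<omega> in M. ?G (\<lambda>\<omega>. ennreal (\<phi> (z \<omega>) (x (Suc n) \<omega>))) \<omega> \<le> ?b (z \<omega>) \<omega>"
  proof (cases "(\<lambda>\<omega>. ennreal (\<phi> (z \<omega>) (x (Suc n) \<omega>))) \<in> borel_measurable M")
    case False
    then show ?thesis by (simp add: nn_cond_exp_def)
  next
    case True
    note fzm[measurable] = True
    obtain T where T: "countable T" "T \<subseteq> S" "S \<subseteq> closure T" using separable[of S] by blast
    have "T \<noteq> {}" using T assms(4) by auto
    define d where "d = from_nat_into T"
    have dT: "range d = T" unfolding d_def using T(1) \<open>T \<noteq> {}\<close> by (simp add: range_from_nat_into)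
    have dS: "\<And>i. d i \<in> S" using dT T(2) by auto
    have approx: "\<And>y k. y \<in> S \<Longrightarrow> \<exists>i. dist y (d i) < inverse (real (Suc k))"
    proof -
      fix y k assume "y \<in> S"
      then have "y \<in> closure T" using T by auto
      then obtain t where "t \<in> T" "dist t y < inverse (real (Suc k))"
        unfolding closure_approachable by (metis inverse_positive_iff_positive of_nat_0_less_iff zero_less_Suc)
      then show "\<exists>i. dist y (d i) < inverse (real (Suc k))" using dT by (metis dist_commute imageE)
    qed
    define J where "J = (\<lambda>k \<omega>. LEAST i. dist (z \<omega>) (d i) < inverse (real (Suc k)))"
    have Jm[measurable]: "\<And>k. J k \<in> measurable (F n) (count_space UNIV)"
      unfolding J_def by measurable
    have Jd: "\<And>k \<omega>. z \<omega> \<in> S \<Longrightarrow> dist (z \<omega>) (d (J k \<omega>)) < inverse (real (Suc k))"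
      unfolding J_def by (rule LeastI_ex) (rule approx)
    define f where "f = (\<lambda>i \<omega>. ennreal (\<phi> (d i) (x (Suc n) \<omega>)))"
    have fm[measurable]: "\<And>i. f i \<in> borel_measurable M"
      unfolding f_def using car(2) by measurable
    have fkm[measurable]: "\<And>k. (\<lambda>\<omega>. f (J k \<omega>) \<omega>) \<in> borel_measurable M"
      by (rule measurable_compose_countable[OF fm measurable_from_subalg[OF subalg Jm]])
    have hyp: "AE \<omega> in M. \<forall>i. ?G (f i) \<omega> \<le> ?b (d i) \<omega>"
      unfolding AE_all_countable f_def using assms(15) dS by blast
    have step1: "\<And>k. AE \<omega> in M. ?G (\<lambda>\<omega>. f (J k \<omega>) \<omega>) \<omega> \<le> ?b (d (J k \<omega>)) \<omega>"
    proof -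
      fix k
      have piece: "AE \<omega> in M. ?G (\<lambda>\<omega>. f (J k \<omega>) \<omega>) \<omega> = ?G (f (J k \<omega>)) \<omega>"
        by (rule nn_cond_exp_countable_piece[OF Jm[of k] fm])
      show "AE \<omega> in M. ?G (\<lambda>\<omega>. f (J k \<omega>) \<omega>) \<omega> \<le> ?b (d (J k \<omega>)) \<omega>"
        using piece hyp
      proof eventually_elim
        case (elim \<omega>)
        show ?case unfolding elim(1) using elim(2) by blast
      qed
    qed
    define g where "g = (\<lambda>m \<omega>. INF k\<in>{m..}. f (J k \<omega>) \<omega>)"
    have gm[measurable]: "\<And>m. g m \<in> borel_measurable M" unfolding g_def by measurable
    have ginc: "\<And>m \<omega>. g m \<omega> \<le> g (Suc m) \<omega>" unfolding g_def by (rule INF_superset_mono) auto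
    have step2: "AE \<omega> in M. \<forall>m k. m \<le> k \<longrightarrow> ?G (g m) \<omega> \<le> ?G (\<lambda>\<omega>. f (J k \<omega>) \<omega>) \<omega>"
      unfolding AE_all_countable
    proof (intro allI)
      fix m k
      show "AE \<omega> in M. m \<le> k \<longrightarrow> ?G (g m) \<omega> \<le> ?G (\<lambda>\<omega>. f (J k \<omega>) \<omega>) \<omega>"
      proof (cases "m \<le> k")
        case True
        have "AE \<omega> in M. ?G (g m) \<omega> \<le> ?G (\<lambda>\<omega>. f (J k \<omega>) \<omega>) \<omega>"
          by (rule nn_cond_exp_mono) (auto simp: g_def True intro!: INF_lower)
        then show ?thesis by auto
      qed simp
    qed
    have step1': "AE \<omega> in M. \<forall>k. ?G (\<lambda>\<omega>. f (J k \<omega>) \<omega>) \<omega> \<le> ?b (d (J k \<omega>)) \<omega>"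
      unfolding AE_all_countable using step1 by blast
    have step4: "AE \<omega> in M. ?G (\<lambda>\<omega>. SUP m. g m \<omega>) \<omega> = (SUP m. ?G (g m) \<omega>)"
      by (rule nn_cond_exp_SUP[where g=g]) (auto intro: ginc)
    have conv: "\<And>\<omega>. z \<omega> \<in> S \<Longrightarrow> (\<lambda>k. d (J k \<omega>)) \<longlonglongrightarrow> z \<omega>"
    proof (rule metric_LIMSEQ_I)
      fix \<omega> and r :: real assume zS': "z \<omega> \<in> S" and r: "0 < r"
      obtain N where N: "inverse (real (Suc N)) < r" using reals_Archimedean[OF r] by blast
      show "\<exists>no. \<forall>k\<ge>no. dist (d (J k \<omega>)) (z \<omega>) < r"
      proof (intro exI allI impI)
        fix k assume "N \<le> k"
        then have "inverse (real (Suc k)) \<le> inverse (real (Suc N))"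
          by (simp add: le_imp_inverse_le)
        moreover have "dist (d (J k \<omega>)) (z \<omega>) < inverse (real (Suc k))"
          using Jd[OF zS', of k] by (simp only: dist_commute)
        ultimately show "dist (d (J k \<omega>)) (z \<omega>) < r" using N by linarith
      qed
    qed
    have tend: "\<And>y \<omega>. z \<omega> \<in> S \<Longrightarrow> (\<lambda>k. \<phi> (d (J k \<omega>)) y) \<longlonglongrightarrow> \<phi> (z \<omega>) y"
    proof -
      fix y \<omega> assume "z \<omega> \<in> S"
      have "isCont (\<lambda>x. \<phi> x y) (z \<omega>)"
        using car(1)[of y] by (simp add: continuous_on_eq_continuous_at)
      then show "(\<lambda>k. \<phi> (d (J k \<omega>)) y) \<longlonglongrightarrow> \<phi> (z \<omega>) y"
        using isCont_tendsto_compose conv[OF \<open>z \<omega> \<in> S\<close>] by blast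
    qed
    have step3: "AE \<omega> in M. z \<omega> \<in> S \<longrightarrow> (SUP m. g m \<omega>) = ennreal (\<phi> (z \<omega>) (x (Suc n) \<omega>))
        \<and> (SUP m. INF k\<in>{m..}. ?b (d (J k \<omega>)) \<omega>) = ?b (z \<omega>) \<omega>"
    proof (intro AE_I2 impI conjI)
      fix \<omega> assume zw: "z \<omega> \<in> S"
      have "(\<lambda>k. f (J k \<omega>) \<omega>) \<longlonglongrightarrow> ennreal (\<phi> (z \<omega>) (x (Suc n) \<omega>))"
        unfolding f_def by (intro tendsto_ennrealI tend zw)
      then have "liminf (\<lambda>k. f (J k \<omega>) \<omega>) = ennreal (\<phi> (z \<omega>) (x (Suc n) \<omega>))"
        by (intro lim_imp_Liminf) auto
      then show "(SUP m. g m \<omega>) = ennreal (\<phi> (z \<omega>) (x (Suc n) \<omega>))"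
        by (simp add: g_def liminf_SUP_INF)
      have "(\<lambda>k. ?b (d (J k \<omega>)) \<omega>) \<longlonglongrightarrow> ?b (z \<omega>) \<omega>"
        by (intro tendsto_ennrealI tendsto_intros tend zw)
      then have "liminf (\<lambda>k. ?b (d (J k \<omega>)) \<omega>) = ?b (z \<omega>) \<omega>"
        by (intro lim_imp_Liminf) auto
      then show "(SUP m. INF k\<in>{m..}. ?b (d (J k \<omega>)) \<omega>) = ?b (z \<omega>) \<omega>"
        by (simp add: liminf_SUP_INF)
    qed
    have step5: "AE \<omega> in M. ?G (\<lambda>\<omega>. ennreal (\<phi> (z \<omega>) (x (Suc n) \<omega>))) \<omega> = ?G (\<lambda>\<omega>. SUP m. g m \<omega>) \<omega>"
      by (rule nn_cond_exp_cong) (use step3 zS in \<open>auto elim: AE_mp\<close>)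
    show ?thesis
      using step1' step2 step3 step4 step5 zS
    proof eventually_elim
      case (elim \<omega>)
      have s3: "(SUP m. g m \<omega>) = ennreal (\<phi> (z \<omega>) (x (Suc n) \<omega>))"
        "(SUP m. INF k\<in>{m..}. ?b (d (J k \<omega>)) \<omega>) = ?b (z \<omega>) \<omega>"
        using elim(3) elim(6) by auto
      have "?G (\<lambda>\<omega>. ennreal (\<phi> (z \<omega>) (x (Suc n) \<omega>))) \<omega> = (SUP m. ?G (g m) \<omega>)"
        using elim(4) elim(5) by (simp only:)
      also have "\<dots> \<le> (SUP m. INF k\<in>{m..}. ?b (d (J k \<omega>)) \<omega>)"
      proof (rule SUP_mono)
        fix m
        have "?G (g m) \<omega> \<le> (INF k\<in>{m..}. ?b (d (J k \<omega>)) \<omega>)"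
        proof (rule INF_greatest)
          fix k assume "k \<in> {m..}"
          then have "?G (g m) \<omega> \<le> ?G (\<lambda>\<omega>. f (J k \<omega>) \<omega>) \<omega>" using elim(2) by simp
          also have "\<dots> \<le> ?b (d (J k \<omega>)) \<omega>" using elim(1) by blast
          finally show "?G (g m) \<omega> \<le> ?b (d (J k \<omega>)) \<omega>" .
        qed
        then show "\<exists>m'\<in>UNIV. ?G (g m) \<omega> \<le> (INF k\<in>{m'..}. ?b (d (J k \<omega>)) \<omega>)" by blast
      qed
      also have "\<dots> = ?b (z \<omega>) \<omega>" using s3 by (simp only:)
      finally show ?case .
    qed
  qed
qed

end
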